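(* Let $X$ be a connected, locally path connected space, $n\in\mathbb{N}$, and let $A_1,\dots,A_n\subseteq X$ be open subsets such that each closure $\overline{A_i}$ is path connected. Let $p:X\to X/(A_1,\dots,A_n)$ be the associated quotient map, and suppose $X/(A_1,\dots,A_n)$ is semi-locally simply connected. Then for every $a\in\bigcup_{i=1}^n A_i$, with $*=p(a)$, the homomorphism $p_*:\pi_1^{top}(X,a)\to\pi_1^{top}(X/(A_1,\dots,A_n),* )$ is surjective.
   Context: For subsets $A_1,\dots,A_n$ of a space $X$, $X/(A_1,\dots,A_n)$ denotes the quotient space of $X$ by the equivalence relation generated by identifying all points of $A_i$ with each other for each $i$, and $p$ is the quotient map. $\pi_1^{top}(X,x)$ is $\pi_1(X,x)$ with the quotient topology from the loop space $\Omega(X,x)$ with the compact-open topology. A space $Y$ is semi-locally simply connected if every $y\in Y$ has an open neighborhood $U$ such that every loop in $U$ based at $y$ is nullhomotopic in $Y$. *)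

theory Defs
  imports "HOL-Analysis.Analysis"
begin

definition collapse_rel :: "'a topology \<Rightarrow> nat \<Rightarrow> (nat \<Rightarrow> 'a set) \<Rightarrow> ('a \<times> 'a) set" where
  "collapse_rel X n A = (Id_on (topspace X) \<union> (\<Union>i\<in>{1..n}. A i \<times> A i))\<^sup>+"

definition collapse_map :: "'a topology \<Rightarrow> nat \<Rightarrow> (nat \<Rightarrow> 'a set) \<Rightarrow> 'a \<Rightarrow> 'a set" where
  "collapse_map X n A x = collapse_rel X n A `` {x}"

definition quotient_top :: "'a topology \<Rightarrow> ('a \<Rightarrow> 'b) \<Rightarrow> 'b topology" where
  "quotient_top X f = topology (\<lambda>U. U \<subseteq> f ` topspace X \<and> openin X {x \<in> topspace X. f x \<in> U})"

definition collapse_space :: "'a topology \<Rightarrow> nat \<Rightarrow> (nat \<Rightarrow> 'a set) \<Rightarrow> 'a set topology" where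
  "collapse_space X n A = quotient_top X (collapse_map X n A)"

definition homotopic_loops_at :: "'b topology \<Rightarrow> 'b \<Rightarrow> (real \<Rightarrow> 'b) \<Rightarrow> (real \<Rightarrow> 'b) \<Rightarrow> bool" where
  "homotopic_loops_at Y y f g =
     homotopic_with (\<lambda>h. h 0 = y \<and> h 1 = y) (top_of_set {0..1}) Y f g"

definition loop_at :: "'b topology \<Rightarrow> 'b \<Rightarrow> (real \<Rightarrow> 'b) \<Rightarrow> bool" where
  "loop_at Y y g \<longleftrightarrow> pathin Y g \<and> g 0 = y \<and> g 1 = y"

definition semi_locally_simply_connected :: "'b topology \<Rightarrow> bool" where
  "semi_locally_simply_connected Y \<longleftrightarrow>
     (\<forall>y \<in> topspace Y. \<exists>U. openin Y U \<and> y \<in> U \<and>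
        (\<forall>g. loop_at (subtopology Y U) y g \<longrightarrow> homotopic_loops_at Y y g (\<lambda>_. y)))"

end

theory Submission
  imports Defs
begin

definition jn :: "(real \<Rightarrow> 'b) \<Rightarrow> (real \<Rightarrow> 'b) \<Rightarrow> real \<Rightarrow> 'b" (infixr "+j+" 75) where
  "g +j+ h = (\<lambda>x. if x \<le> 1/2 then g (2 * x) else h (2 * x - 1))"

definition rv :: "(real \<Rightarrow> 'b) \<Rightarrow> real \<Rightarrow> 'b" where
  "rv g = (\<lambda>x. g (1 - x))"

definition hp :: "'b topology \<Rightarrow> (real \<Rightarrow> 'b) \<Rightarrow> (real \<Rightarrow> 'b) \<Rightarrow> bool" where
  "hp Y g h \<longleftrightarrow> homotopic_with (\<lambda>k. k 0 = g 0 \<and> k 1 = g 1) (top_of_set {0..1}) Y g h"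

lemma hp_imp: "hp Y g h \<Longrightarrow> pathin Y g \<and> pathin Y h \<and> h 0 = g 0 \<and> h 1 = g 1"
proof -
  assume a: "hp Y g h"
  have "continuous_map (top_of_set {0..1}) Y g \<and> continuous_map (top_of_set {0..1}) Y h"
    using a unfolding hp_def by (rule homotopic_with_imp_continuous_maps)
  moreover have "h 0 = g 0 \<and> h 1 = g 1"
    using homotopic_with_imp_property[OF a[unfolded hp_def]] by simp
  ultimately show ?thesis by (simp add: pathin_def)
qed

lemma hp_refl: "pathin Y g \<Longrightarrow> hp Y g g"
  by (simp add: hp_def pathin_def)

lemma hp_sym: assumes "hp Y g h" shows "hp Y h g"
proof -
  have e: "h 0 = g 0" "h 1 = g 1" using hp_imp[OF assms] by auto
  show ?thesis using assms unfolding hp_def e using homotopic_with_symD by blast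
qed

lemma hp_trans: assumes "hp Y g h" "hp Y h k" shows "hp Y g k"
proof -
  have e: "h 0 = g 0" "h 1 = g 1" using hp_imp[OF assms(1)] by auto
  show ?thesis using assms unfolding hp_def e by (rule homotopic_with_trans)
qed

lemma hp_eq: assumes "pathin Y g" "\<And>x. x \<in> {0..1} \<Longrightarrow> g x = h x" shows "hp Y g h"
  unfolding hp_def
proof (rule homotopic_with_equal)
  show "continuous_map (top_of_set {0..1}) Y g" using assms(1) by (simp add: pathin_def)
  have "g 0 = h 0" "g 1 = h 1" using assms(2)[of 0] assms(2)[of 1] by auto
  then show "h 0 = g 0 \<and> h 1 = g 1" by simp
qed (use assms(2) in auto)

lemma hp_compose: assumes "hp X g h" "continuous_map X Y p" shows "hp Y (p \<circ> g) (p \<circ> h)"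
  using assms unfolding hp_def
  by (rule homotopic_with_compose_continuous_map_left) auto

lemma hp_reparam:
  assumes g: "pathin Y g"
    and c1: "continuous_on {0..1} f1" and c2: "continuous_on {0..1} f2"
    and r1: "f1 ` {0..1} \<subseteq> {0..1}" and r2: "f2 ` {0..1} \<subseteq> {0..1}"
    and e0: "f1 0 = f2 0" and e1: "f1 1 = f2 1"
  shows "hp Y (g \<circ> f1) (g \<circ> f2)"
  unfolding hp_def homotopic_with_def
proof (intro exI conjI)
  let ?F = "\<lambda>z::real\<times>real. (1 - fst z) * f1 (snd z) + fst z * f2 (snd z)"
  have cF: "continuous_on ({0..1}\<times>{0..1}) ?F"
    by (intro continuous_intros continuous_on_compose2[OF c1] continuous_on_compose2[OF c2]) auto
  have rF: "?F z \<in> {0..1}" if "z \<in> {0..1}\<times>{0..1}" for z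
  proof -
    obtain t s where z0: "z = (t,s)" by (cases z)
    then have z: "z = (t,s)" "t \<in> {0..1}" "s \<in> {0..1}" using that by auto
    have a: "f1 s \<in> {0..1}" "f2 s \<in> {0..1}" using r1 r2 z(3) by (auto simp: image_subset_iff simp del: atLeastAtMost_iff)
    have "0 \<le> (1-t) * f1 s + t * f2 s" using a z by auto
    moreover have "(1-t) * f1 s + t * f2 s \<le> (1-t) * 1 + t * 1"
      using a z by (intro add_mono mult_left_mono) auto
    ultimately show ?thesis using z by auto
  qed
  have m: "continuous_map (top_of_set ({0..1}\<times>{0..1})) (top_of_set {0..1}) ?F"
    using cF rF by (auto simp: continuous_map_in_subtopology)
  have "continuous_map (top_of_set ({0..1}\<times>{0..1})) Y (g \<circ> ?F)"
    using continuous_map_compose[OF m g[unfolded pathin_def]] .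
  then show "continuous_map (prod_topology (top_of_set {0..1}) (top_of_set {0..1})) Y (g \<circ> ?F)"
    by simp
next
  show "\<forall>x. (g \<circ> (\<lambda>z. (1 - fst z) * f1 (snd z) + fst z * f2 (snd z))) (0, x) = (g \<circ> f1) x"
    by simp
  show "\<forall>x. (g \<circ> (\<lambda>z. (1 - fst z) * f1 (snd z) + fst z * f2 (snd z))) (1, x) = (g \<circ> f2) x"
    by simp
  have eq: "(1 - t) * a + t * a = a" for t a :: real by (simp add: left_diff_distrib)
  show "\<forall>t\<in>{0..1}. (\<lambda>x. (g \<circ> (\<lambda>z. (1 - fst z) * f1 (snd z) + fst z * f2 (snd z))) (t, x)) 0 = (g \<circ> f1) 0 \<and>
        (\<lambda>x. (g \<circ> (\<lambda>z. (1 - fst z) * f1 (snd z) + fst z * f2 (snd z))) (t, x)) 1 = (g \<circ> f1) 1"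
    by (simp add: e0 e1 eq)
qed

lemma pathin_reparam:
  assumes g: "pathin Y g" and c1: "continuous_on {0..1} f1" and r1: "f1 ` {0..1} \<subseteq> {0..1}"
  shows "pathin Y (g \<circ> f1)"
  using hp_imp[OF hp_reparam[OF g c1 c1 r1 r1]] by auto

lemma cm_helper:
  assumes "continuous_on S m" "m ` S \<subseteq> T" "continuous_map (top_of_set T) Y G"
  shows "continuous_map (top_of_set S) Y (G \<circ> m)"
proof -
  have "continuous_map (top_of_set S) (top_of_set T) m"
    using assms(1,2) by (auto simp: continuous_map_subtopology_eu image_subset_iff_funcset)
  then show ?thesis using assms(3) by (rule continuous_map_compose)
qed

lemma sub_eq: "subtopology (top_of_set S) {x \<in> topspace (top_of_set S). P x} = top_of_set {x\<in>S. P x}"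
  by (simp add: subtopology_subtopology Collect_conj_eq Int_commute)

lemma hp_join:
  assumes gg: "hp Y g g'" and hh: "hp Y h h'" and e: "g 1 = h 0"
  shows "hp Y (g +j+ h) (g' +j+ h')"
proof -
  let ?S = "{0..1::real} \<times> {0..1::real}"
  obtain G where Gc: "continuous_map (top_of_set ?S) Y G" and G0: "\<forall>x. G (0,x) = g x"
      and G1: "\<forall>x. G (1,x) = g' x" and GP: "\<forall>t\<in>{0..1}. G (t,0) = g 0 \<and> G (t,1) = g 1"
    using gg unfolding hp_def homotopic_with_def by auto
  obtain K where Kc: "continuous_map (top_of_set ?S) Y K" and K0: "\<forall>x. K (0,x) = h x"
      and K1: "\<forall>x. K (1,x) = h' x" and KP: "\<forall>t\<in>{0..1}. K (t,0) = h 0 \<and> K (t,1) = h 1"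
    using hh unfolding hp_def homotopic_with_def by auto
  define k where "k = (\<lambda>z::real\<times>real. if snd z \<le> 1/2 then (G \<circ> (\<lambda>z. (fst z, 2 * snd z))) z
                                   else (K \<circ> (\<lambda>z. (fst z, 2 * snd z - 1))) z)"
  have kc: "continuous_map (top_of_set ?S) Y k"
    unfolding k_def
  proof (rule continuous_map_cases_le)
    show "continuous_map (top_of_set ?S) euclideanreal snd"
      by (simp add: continuous_on_snd)
    show "continuous_map (top_of_set ?S) euclideanreal (\<lambda>x. 1/2)" by simp
    show "continuous_map (subtopology (top_of_set ?S) {x \<in> topspace (top_of_set ?S). snd x \<le> 1/2}) Y
            (G \<circ> (\<lambda>z. (fst z, 2 * snd z)))"
      unfolding sub_eq
      by (rule cm_helper[OF _ _ Gc]) (auto intro!: continuous_intros)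
    show "continuous_map (subtopology (top_of_set ?S) {x \<in> topspace (top_of_set ?S). 1/2 \<le> snd x}) Y
            (K \<circ> (\<lambda>z. (fst z, 2 * snd z - 1)))"
      unfolding sub_eq
      by (rule cm_helper[OF _ _ Kc]) (auto intro!: continuous_intros)
    fix x assume "x \<in> topspace (top_of_set ?S)" "snd x = 1/2"
    then show "(G \<circ> (\<lambda>z. (fst z, 2 * snd z))) x = (K \<circ> (\<lambda>z. (fst z, 2 * snd z - 1))) x"
    proof (cases x)
      case (Pair a b)
      then have x: "x = (a, 1/2)" "a \<in> {0..1}" using \<open>snd x = 1/2\<close> \<open>x \<in> _\<close> by auto
      show ?thesis unfolding x(1) using GP KP e x(2) by simp
    qed
  qed
  show ?thesis
    unfolding hp_def homotopic_with_def
  proof (intro exI conjI)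
    show "continuous_map (prod_topology (top_of_set {0..1}) (top_of_set {0..1})) Y k"
      using kc by simp
    show "\<forall>x. k (0, x) = (g +j+ h) x" using G0 K0 by (simp add: k_def jn_def)
    show "\<forall>x. k (1, x) = (g' +j+ h') x" using G1 K1 by (simp add: k_def jn_def)
    show "\<forall>t\<in>{0..1}. (\<lambda>x. k (t, x)) 0 = (g +j+ h) 0 \<and> (\<lambda>x. k (t, x)) 1 = (g +j+ h) 1"
      using GP KP by (simp add: k_def jn_def)
  qed
qed

lemma pathin_join: "pathin Y g \<Longrightarrow> pathin Y h \<Longrightarrow> g 1 = h 0 \<Longrightarrow> pathin Y (g +j+ h)"
  using hp_imp[OF hp_join[OF hp_refl hp_refl]] by blast

lemma j0[simp]: "(g +j+ h) 0 = g 0" and j1[simp]: "(g +j+ h) 1 = h 1"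
  and r0[simp]: "rv g 0 = g 1" and r1[simp]: "rv g 1 = g 0"
  by (simp_all add: jn_def rv_def)

lemma hp_via:
  assumes "pathin Y g" "continuous_on {0..1} u" "u ` {0..1} \<subseteq> {0..1}"
    "continuous_on {0..1} v" "v ` {0..1} \<subseteq> {0..1}" "u 0 = v 0" "u 1 = v 1"
    "\<And>x. x \<in> {0..1} \<Longrightarrow> a x = g (u x)" "\<And>x. x \<in> {0..1} \<Longrightarrow> b x = g (v x)"
  shows "hp Y a b"
proof -
  have h: "hp Y (g \<circ> u) (g \<circ> v)" using hp_reparam assms(1-7) by blast
  have p1: "pathin Y (g \<circ> u)" using hp_imp[OF h] by blast
  have p2: "pathin Y (g \<circ> v)" using hp_imp[OF h] by blast
  have "hp Y a (g \<circ> u)"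
    by (rule hp_sym, rule hp_eq[OF p1]) (simp add: assms(8))
  moreover have "hp Y (g \<circ> v) b"
    by (rule hp_eq[OF p2]) (simp add: assms(9))
  ultimately show ?thesis using h hp_trans by blast
qed

lemma pathin_reverse: "pathin Y g \<Longrightarrow> pathin Y (rv g)"
proof -
  assume g: "pathin Y g"
  have "continuous_on {0..1} (\<lambda>x::real. 1 - x)" by (intro continuous_intros)
  moreover have "(\<lambda>x::real. 1 - x) ` {0..1} \<subseteq> {0..1}" by auto
  ultimately have "pathin Y (g \<circ> (\<lambda>x. 1 - x))" using pathin_reparam[OF g] by blast
  then show ?thesis by (simp add: rv_def o_def)
qed

lemma hp_assoc:
  assumes "pathin Y p" "pathin Y q" "pathin Y r" "p 1 = q 0" "q 1 = r 0"
  shows "hp Y (p +j+ (q +j+ r)) ((p +j+ q) +j+ r)"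
proof (rule hp_via[where g="(p +j+ q) +j+ r" and u="\<lambda>x. max (x/2) (max (x - 1/4) (2*x - 1))" and v="\<lambda>x. x"])
  show "pathin Y ((p +j+ q) +j+ r)" using assms by (simp add: pathin_join)
  show "continuous_on {0..1} (\<lambda>x::real. max (x/2) (max (x - 1/4) (2*x - 1)))"
    by (intro continuous_intros) auto
  show "(\<lambda>x::real. max (x/2) (max (x - 1/4) (2*x - 1))) ` {0..1} \<subseteq> {0..1}" by (auto simp: max_def)
  fix x :: real assume x: "x \<in> {0..1}"
  show "(p +j+ (q +j+ r)) x = ((p +j+ q) +j+ r) (max (x / 2) (max (x - 1 / 4) (2 * x - 1)))"
  proof (cases "x \<le> 1/2")
    case True
    then have "max (x / 2) (max (x - 1 / 4) (2 * x - 1)) = x/2" by auto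
    then show ?thesis using True by (simp add: jn_def)
  next
    case False
    show ?thesis
    proof (cases "x \<le> 3/4")
      case True
      then have "max (x / 2) (max (x - 1 / 4) (2 * x - 1)) = x - 1/4" using False by auto
      then show ?thesis using True False by (simp add: jn_def algebra_simps)
    next
      case F2: False
      then have "max (x / 2) (max (x - 1 / 4) (2 * x - 1)) = 2*x - 1" using False by auto
      then show ?thesis using F2 False by (simp add: jn_def algebra_simps)
    qed
  qed
qed auto

lemma hp_runit: "pathin Y g \<Longrightarrow> hp Y (g +j+ (\<lambda>_. g 1)) g"
  by (rule hp_via[where g=g and u="\<lambda>x. min 1 (2*x)" and v="\<lambda>x. x"])
     (auto intro!: continuous_intros simp: jn_def)

lemma hp_lunit: "pathin Y g \<Longrightarrow> hp Y ((\<lambda>_. g 0) +j+ g) g"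
  by (rule hp_via[where g=g and u="\<lambda>x. max 0 (2*x - 1)" and v="\<lambda>x. x"])
     (auto intro!: continuous_intros simp: jn_def)

lemma hp_linv: "pathin Y g \<Longrightarrow> hp Y (rv g +j+ g) (\<lambda>_. g 1)"
  by (rule hp_via[where g=g and u="\<lambda>x. \<bar>1 - 2*x\<bar>" and v="\<lambda>x. 1"])
     (auto intro!: continuous_intros simp: jn_def rv_def)

lemma hp_rinv: "pathin Y g \<Longrightarrow> hp Y (g +j+ rv g) (\<lambda>_. g 0)"
  by (rule hp_via[where g=g and u="\<lambda>x. 1 - \<bar>1 - 2*x\<bar>" and v="\<lambda>x. 0"])
     (auto intro!: continuous_intros simp: jn_def rv_def)

lemma hp_cancel:
  assumes a: "pathin Y a" and g: "pathin Y g" and b: "pathin Y b"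
    and e: "a 0 = y" "b 0 = y" "a 1 = g 0" "g 1 = b 1"
    and H: "hp Y (a +j+ (g +j+ rv b)) (\<lambda>_. y)"
  shows "hp Y g (rv a +j+ b)"
proof -
  have ra: "pathin Y (rv a)" and rb: "pathin Y (rv b)"
    using a b pathin_reverse by auto
  have ag: "pathin Y (a +j+ g)" using a g e by (simp add: pathin_join)
  have s1: "hp Y g ((\<lambda>_. g 0) +j+ g)" using hp_lunit[OF g] by (rule hp_sym)
  have s2: "hp Y ((\<lambda>_. g 0) +j+ g) ((rv a +j+ a) +j+ g)"
    using hp_join[OF hp_sym[OF hp_linv[OF a]] hp_refl[OF g]] e by simp
  have s3: "hp Y ((rv a +j+ a) +j+ g) (rv a +j+ (a +j+ g))"
    using hp_sym[OF hp_assoc[OF ra a g]] e by simp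
  have t1: "hp Y (a +j+ g) ((a +j+ g) +j+ (\<lambda>_. g 1))"
    using hp_sym[OF hp_runit[OF ag]] by simp
  have t2: "hp Y ((a +j+ g) +j+ (\<lambda>_. g 1)) ((a +j+ g) +j+ (rv b +j+ b))"
    using hp_join[OF hp_refl[OF ag] hp_sym[OF hp_linv[OF b]]] e by simp
  have t3: "hp Y ((a +j+ g) +j+ (rv b +j+ b)) (((a +j+ g) +j+ rv b) +j+ b)"
    using hp_assoc[OF ag rb b] e by simp
  have t4: "hp Y (((a +j+ g) +j+ rv b) +j+ b) ((a +j+ (g +j+ rv b)) +j+ b)"
    using hp_join[OF hp_sym[OF hp_assoc[OF a g rb]] hp_refl[OF b]] e by simp
  have t5: "hp Y ((a +j+ (g +j+ rv b)) +j+ b) ((\<lambda>_. y) +j+ b)"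
    using hp_join[OF H hp_refl[OF b]] e by simp
  have t6: "hp Y ((\<lambda>_. y) +j+ b) b" using hp_lunit[OF b] e by simp
  have "hp Y (a +j+ g) b"
    using hp_trans[OF t1 hp_trans[OF t2 hp_trans[OF t3 hp_trans[OF t4 hp_trans[OF t5 t6]]]]] .
  then have s4: "hp Y (rv a +j+ (a +j+ g)) (rv a +j+ b)"
    using hp_join[OF hp_refl[OF ra]] e by simp
  show ?thesis using hp_trans[OF s1 hp_trans[OF s2 hp_trans[OF s3 s4]]] .
qed

lemma hp_strick:
  assumes h: "pathin Y h" and h0: "h 0 = c" and h1: "h 1 = c"
    and good: "\<And>s W. s \<in> {0..1} \<Longrightarrow> openin Y W \<Longrightarrow> h s \<in> W \<Longrightarrow> c \<in> W"
  shows "hp Y h (\<lambda>_. c)"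
  unfolding hp_def homotopic_with_def
proof (intro exI conjI)
  let ?I = "top_of_set {0..1::real}"
  let ?k = "\<lambda>z::real\<times>real. if fst z = 0 then h (snd z) else c"
  have hc: "continuous_map ?I Y h" using h by (simp add: pathin_def)
  have cT: "c \<in> topspace Y" using h h0 path_start_in_topspace by metis
  show "continuous_map (prod_topology ?I ?I) Y ?k"
    unfolding continuous_map_def
  proof (intro conjI allI impI)
    show "?k \<in> topspace (prod_topology ?I ?I) \<rightarrow> topspace Y"
      using hc cT by (auto simp: continuous_map_def)
    fix W assume W: "openin Y W"
    show "openin (prod_topology ?I ?I) {x \<in> topspace (prod_topology ?I ?I). ?k x \<in> W}"
    proof (cases "c \<in> W")
      case True
      have e: "{x \<in> topspace (prod_topology ?I ?I). ?k x \<in> W} =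
             ({0..1} \<times> {s \<in> topspace ?I. h s \<in> W}) \<union> (({0..1} \<inter> -{0}) \<times> {0..1})"
        using True by auto
      have o1: "openin ?I {s \<in> topspace ?I. h s \<in> W}"
        using openin_continuous_map_preimage[OF hc W] .
      have o2: "openin ?I ({0..1} \<inter> -{0})" by (rule openin_open_Int) auto
      have o3: "openin ?I {0..1}" using openin_topspace[of ?I] by simp
      have a1: "openin (prod_topology ?I ?I) ({0..1} \<times> {s \<in> topspace ?I. h s \<in> W})"
        by (subst openin_prod_Times_iff) (use o1 o3 in blast)
      have a2: "openin (prod_topology ?I ?I) (({0..1} \<inter> -{0}) \<times> {0..1})"
        by (subst openin_prod_Times_iff) (use o2 o3 in blast)
      show ?thesis unfolding e using a1 a2 by (rule openin_Un)
    next
      case False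
      have emp: "{x \<in> topspace (prod_topology ?I ?I). ?k x \<in> W} = {}"
        using False good W by auto
      show ?thesis unfolding emp by (rule openin_empty)
    qed
  qed
qed (auto simp: h0 h1)

lemma openin_quotient_top:
  "openin (quotient_top X f) U \<longleftrightarrow> U \<subseteq> f ` topspace X \<and> openin X {x \<in> topspace X. f x \<in> U}"
proof -
  define L where "L = (\<lambda>U. U \<subseteq> f ` topspace X \<and> openin X {x \<in> topspace X. f x \<in> U})"
  have i1: "L (S \<inter> T)" if "L S" "L T" for S T
  proof -
    have "{x \<in> topspace X. f x \<in> S \<inter> T} = {x \<in> topspace X. f x \<in> S} \<inter> {x \<in> topspace X. f x \<in> T}"
      by auto
    then show ?thesis using that unfolding L_def by auto
  qed
  have i2: "L (\<Union>K)" if K: "\<forall>S\<in>K. L S" for K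
  proof -
    have "{x \<in> topspace X. f x \<in> \<Union>K} = \<Union>((\<lambda>S. {x \<in> topspace X. f x \<in> S}) ` K)"
      by auto
    moreover have "openin X (\<Union>((\<lambda>S. {x \<in> topspace X. f x \<in> S}) ` K))"
      using K unfolding L_def by (intro openin_Union) auto
    ultimately show ?thesis using K unfolding L_def by auto
  qed
  have "istopology L" unfolding istopology_def using i1 i2 by blast
  then have "openin (quotient_top X f) = L" by (simp add: quotient_top_def L_def[symmetric])
  then show ?thesis by (simp add: L_def)
qed

lemma topspace_quotient_top: "topspace (quotient_top X f) = f ` topspace X"
proof -
  have "{x \<in> topspace X. f x \<in> f ` topspace X} = topspace X" by auto
  then have "openin (quotient_top X f) (f ` topspace X)"
    by (auto simp: openin_quotient_top)
  then have "f ` topspace X \<subseteq> topspace (quotient_top X f)" by (rule openin_subset)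
  moreover have "topspace (quotient_top X f) \<subseteq> f ` topspace X"
    using openin_quotient_top[of X f "topspace (quotient_top X f)"] by simp
  ultimately show ?thesis by blast
qed

lemma continuous_map_quotient_top: "continuous_map X (quotient_top X f) f"
  unfolding continuous_map_def by (auto simp: openin_quotient_top topspace_quotient_top)

lemma jn_in: "(\<forall>s\<in>{0..1}. f s \<in> S) \<Longrightarrow> (\<forall>s\<in>{0..1}. h s \<in> S) \<Longrightarrow> (\<forall>s\<in>{0..1}. (f +j+ h) s \<in> S)"
  by (auto simp: jn_def)

lemma rv_in: "(\<forall>s\<in>{0..1}. f s \<in> S) \<Longrightarrow> (\<forall>s\<in>{0..1}. rv f s \<in> S)"
  by (auto simp: rv_def)

lemma p_jn: "p \<circ> (a +j+ b) = (p \<circ> a) +j+ (p \<circ> b)" and p_rv: "p \<circ> rv a = rv (p \<circ> a)"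
  by (auto simp: jn_def rv_def)

definition sp :: "real \<Rightarrow> real \<Rightarrow> (real \<Rightarrow> 'b) \<Rightarrow> real \<Rightarrow> 'b" where
  "sp u v g = (\<lambda>x. g ((v - u) * x + u))"

lemma pathin_sp:
  assumes g: "pathin Y g" and uv: "0 \<le> u" "u \<le> v" "v \<le> 1"
  shows "pathin Y (sp u v g)"
proof -
  have "continuous_on {0..1} (\<lambda>x::real. (v - u) * x + u)" by (intro continuous_intros)
  moreover have "(\<lambda>x::real. (v - u) * x + u) ` {0..1} \<subseteq> {0..1}"
  proof
    fix y assume "y \<in> (\<lambda>x::real. (v - u) * x + u) ` {0..1}"
    then obtain x where x: "x \<in> {0..1}" "y = (v - u) * x + u" by auto
    have "(v - u) * x \<le> (v - u) * 1" using x uv by (intro mult_left_mono) auto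
    moreover have "0 \<le> (v - u) * x" using x uv by auto
    ultimately show "y \<in> {0..1}" using x uv by auto
  qed
  ultimately have "pathin Y (g \<circ> (\<lambda>x::real. (v - u) * x + u))" using pathin_reparam[OF g] by blast
  then show ?thesis by (simp add: sp_def o_def)
qed

lemma sp_split:
  assumes g: "pathin Y g" and uv: "0 \<le> u" "u \<le> v" "v \<le> 1"
  shows "hp Y (sp 0 u g +j+ sp u v g) (sp 0 v g)"
proof (rule hp_via[where g=g and u="\<lambda>x. 2 * u * min x (1/2) + 2 * (v - u) * max (x - 1/2) 0"
      and v="\<lambda>x. v * x"])
  show "continuous_on {0..1} (\<lambda>x::real. 2 * u * min x (1/2) + 2 * (v - u) * max (x - 1/2) 0)"
    by (intro continuous_intros)
  show "continuous_on {0..1} (\<lambda>x::real. v * x)" by (intro continuous_intros)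
  show "(\<lambda>x::real. 2 * u * min x (1/2) + 2 * (v - u) * max (x - 1/2) 0) ` {0..1} \<subseteq> {0..1}"
  proof
    fix y assume "y \<in> (\<lambda>x::real. 2 * u * min x (1/2) + 2 * (v - u) * max (x - 1/2) 0) ` {0..1}"
    then obtain x where x: "x \<in> {0..1}" "y = 2 * u * min x (1/2) + 2 * (v - u) * max (x - 1/2) 0" by auto
    have a: "2 * u * min x (1/2) \<le> 2 * u * (1/2)" using uv by (intro mult_left_mono) auto
    have b: "2 * (v - u) * max (x - 1/2) 0 \<le> 2 * (v - u) * (1/2)" using uv x by (intro mult_left_mono) (auto simp: max_def)
    have c: "0 \<le> 2 * u * min x (1/2)" "0 \<le> 2 * (v - u) * max (x - 1/2) 0" using uv x by auto
    show "y \<in> {0..1}" using a b c x uv by auto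
  qed
  show "(\<lambda>x::real. v * x) ` {0..1} \<subseteq> {0..1}"
  proof
    fix y assume "y \<in> (\<lambda>x::real. v * x) ` {0..1}"
    then obtain x where x: "x \<in> {0..1}" "y = v * x" by auto
    have "v * x \<le> 1 * 1" using x uv by (intro mult_mono) auto
    then show "y \<in> {0..1}" using x uv by auto
  qed
  fix x :: real assume x: "x \<in> {0..1}"
  show "(sp 0 u g +j+ sp u v g) x = g (2 * u * min x (1/2) + 2 * (v - u) * max (x - 1/2) 0)"
  proof (cases "x \<le> 1/2")
    case True
    then show ?thesis by (simp add: jn_def sp_def max_def min_def algebra_simps)
  next
    case False
    then show ?thesis by (simp add: jn_def sp_def max_def min_def algebra_simps)
  qed
  show "sp 0 v g x = g (v * x)" by (simp add: sp_def)
qed (use g in \<open>auto simp: field_simps\<close>)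


locale col =
  fixes X :: "'a topology" and n :: nat and A :: "nat \<Rightarrow> 'a set"
  assumes Aopen: "\<And>i. i \<in> {1..n} \<Longrightarrow> openin X (A i)"
    and Aclos: "\<And>i. i \<in> {1..n} \<Longrightarrow> path_connectedin X (X closure_of (A i))"
begin

abbreviation "T \<equiv> topspace X"
abbreviation "R \<equiv> collapse_rel X n A"
abbreviation "p \<equiv> collapse_map X n A"
abbreviation "Y \<equiv> collapse_space X n A"

lemma Asub: "i \<in> {1..n} \<Longrightarrow> A i \<subseteq> T"
  using Aopen openin_subset by blast

lemma base_sub: "Id_on T \<union> (\<Union>i\<in>{1..n}. A i \<times> A i) \<subseteq> T \<times> T"
  using Asub by blast

lemma R_equiv: "equiv T R"
proof -
  have sub: "R \<subseteq> T \<times> T" unfolding collapse_rel_def using base_sub by (rule trancl_subset_Sigma)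
  moreover have "(x,x) \<in> R" if "x \<in> T" for x
    unfolding collapse_rel_def using that by (intro r_into_trancl) auto
  ultimately have "refl_on T R" by (auto simp: refl_on_def)
  moreover have "sym R" unfolding collapse_rel_def
    by (rule sym_trancl) (auto simp: sym_def)
  moreover have "trans R" unfolding collapse_rel_def by simp
  ultimately show ?thesis using sub by (simp add: equiv_def)
qed

lemma R_sub: "(x,y) \<in> R \<Longrightarrow> x \<in> T \<and> y \<in> T"
  using R_equiv by (auto simp: equiv_def refl_on_def)

lemma p_eq: "x \<in> T \<Longrightarrow> y \<in> T \<Longrightarrow> p x = p y \<longleftrightarrow> (x,y) \<in> R"
  using equiv_class_eq_iff[OF R_equiv, of x y] by (auto simp: collapse_map_def)

lemma R_trans: "(x,y) \<in> R \<Longrightarrow> (y,z) \<in> R \<Longrightarrow> (x,z) \<in> R"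
  using R_equiv by (meson equiv_def transE)

lemma R_sym: "(x,y) \<in> R \<Longrightarrow> (y,x) \<in> R"
  using R_equiv by (meson equiv_def symE)

lemma R_cases: "(z,v) \<in> R \<Longrightarrow> z = v \<or> (\<exists>i\<in>{1..n}. z \<in> A i)"
  unfolding collapse_rel_def
proof (induction rule: trancl_induct)
  case (base y) then show ?case by auto
next
  case (step y w) then show ?case by auto
qed

lemma A_R: "i \<in> {1..n} \<Longrightarrow> x \<in> A i \<Longrightarrow> y \<in> A i \<Longrightarrow> (x,y) \<in> R"
  unfolding collapse_rel_def by (intro r_into_trancl) auto

lemma topY: "topspace Y = p ` T"
  by (simp add: collapse_space_def topspace_quotient_top)

lemma openinY: "openin Y U \<longleftrightarrow> U \<subseteq> p ` T \<and> openin X {x \<in> T. p x \<in> U}"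
  by (simp add: collapse_space_def openin_quotient_top)

lemma contp: "continuous_map X Y p"
  by (simp add: collapse_space_def continuous_map_quotient_top)

lemma open_image: assumes V: "openin X V" shows "openin Y (p ` V)"
  unfolding openinY
proof
  have VT: "V \<subseteq> T" using V openin_subset by blast
  then show "p ` V \<subseteq> p ` T" by blast
  show "openin X {x \<in> T. p x \<in> p ` V}"
  proof (subst openin_subopen, intro ballI)
    fix z assume z: "z \<in> {x \<in> T. p x \<in> p ` V}"
    then obtain v where v: "v \<in> V" "p z = p v" by auto
    then have zv: "(z,v) \<in> R" using p_eq z VT by blast
    show "\<exists>U. openin X U \<and> z \<in> U \<and> U \<subseteq> {x \<in> T. p x \<in> p ` V}"
    proof (cases "z = v")
      case True
      then show ?thesis using V v VT by blast
    next
      case False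
      then obtain i where i: "i \<in> {1..n}" "z \<in> A i" using R_cases[OF zv] by blast
      have "A i \<subseteq> {x \<in> T. p x \<in> p ` V}"
      proof
        fix w assume w: "w \<in> A i"
        then have "(w,v) \<in> R" using A_R[OF i(1) w i(2)] zv R_trans by blast
        then have "p w = p v" using p_eq R_sub by blast
        then show "w \<in> {x \<in> T. p x \<in> p ` V}" using w Asub[OF i(1)] v by auto
      qed
      then show ?thesis using Aopen[OF i(1)] i by blast
    qed
  qed
qed

lemma fiber_path:
  assumes x0: "x0 \<in> T" and x1: "x1 \<in> T" and e: "p x0 = p x1"
  shows "\<exists>\<eta>. pathin X \<eta> \<and> \<eta> 0 = x0 \<and> \<eta> 1 = x1 \<and> hp Y (p \<circ> \<eta>) (\<lambda>_. p x0)"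
proof -
  define good where "good z \<longleftrightarrow> z \<in> T \<and> (\<forall>W. openin Y W \<and> p z \<in> W \<longrightarrow> p x0 \<in> W)" for z
  have clos: "good z" if i: "i \<in> {1..n}" and w: "w \<in> A i" and xw: "(x0,w) \<in> R"
    and z: "z \<in> X closure_of A i" for i w z
  proof -
    have zT: "z \<in> T" using z by (simp add: in_closure_of)
    have "p x0 \<in> W" if W: "openin Y W" "p z \<in> W" for W
    proof -
      have N: "openin X {x \<in> T. p x \<in> W}" using W(1) unfolding openinY by blast
      have zz: "\<forall>U. z \<in> U \<and> openin X U \<longrightarrow> (\<exists>y. y \<in> A i \<and> y \<in> U)"
        using z by (simp add: in_closure_of)
      have zN: "z \<in> {x \<in> T. p x \<in> W}" using zT W(2) by simp
      obtain q where q: "q \<in> A i" "q \<in> {x \<in> T. p x \<in> W}"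
        using zz[rule_format, OF conjI[OF zN N]] by blast
      have "(x0,q) \<in> R" using R_trans[OF xw A_R[OF i w q(1)]] .
      then have "p x0 = p q" using p_eq R_sub by blast
      then show ?thesis using q by simp
    qed
    then show ?thesis unfolding good_def using zT by blast
  qed
  have seg: "\<exists>\<eta>. pathin X \<eta> \<and> \<eta> 0 = y \<and> \<eta> 1 = z \<and> (\<forall>s\<in>{0..1}. good (\<eta> s))"
    if i: "i \<in> {1..n}" and y: "y \<in> A i" and z: "z \<in> A i" and xy: "(x0,y) \<in> R" for i y z
  proof -
    have sub: "A i \<subseteq> X closure_of A i" using closure_of_subset[OF Asub[OF i]] .
    have pc: "\<forall>x\<in>X closure_of A i. \<forall>y\<in>X closure_of A i. \<exists>g. pathin X g \<and> g \<in> {0..1} \<rightarrow> X closure_of A i \<and> g 0 = x \<and> g 1 = y"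
      using Aclos[OF i] unfolding path_connectedin by blast
    have yS: "y \<in> X closure_of A i" and zS: "z \<in> X closure_of A i" using sub y z by auto
    obtain g where g: "pathin X g" "g \<in> {0..1} \<rightarrow> X closure_of A i" "g 0 = y" "g 1 = z"
      using pc yS zS by blast
    have "good (g s)" if "s \<in> {0..1}" for s
      using clos[OF i y xy] g(2) that by blast
    then show ?thesis using g by blast
  qed
  have main: "\<exists>\<eta>. pathin X \<eta> \<and> \<eta> 0 = x0 \<and> \<eta> 1 = x \<and> (\<forall>s\<in>{0..1}. good (\<eta> s))"
    if "(x0, x) \<in> R" for x
    using that unfolding collapse_rel_def
  proof (induction rule: trancl_induct)
    case (base y)
    then show ?case
    proof
      assume "(x0, y) \<in> Id_on T"
      then have "y = x0" "x0 \<in> T" by auto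
      then show ?thesis using good_def by (intro exI[of _ "\<lambda>_. x0"]) auto
    next
      assume "(x0, y) \<in> (\<Union>i\<in>{1..n}. A i \<times> A i)"
      then obtain i where i: "i \<in> {1..n}" "x0 \<in> A i" "y \<in> A i" by auto
      have "(x0,x0) \<in> R" using A_R[OF i(1,2,2)] .
      then show ?thesis using seg[OF i] by blast
    qed
  next
    case (step y z)
    then obtain \<eta> where eta: "pathin X \<eta>" "\<eta> 0 = x0" "\<eta> 1 = y" "\<forall>s\<in>{0..1}. good (\<eta> s)"
      by blast
    have xy: "(x0,y) \<in> R" using step(1) unfolding collapse_rel_def .
    from step(2) show ?case
    proof
      assume "(y, z) \<in> Id_on T"
      then show ?thesis using eta by auto
    next
      assume "(y, z) \<in> (\<Union>i\<in>{1..n}. A i \<times> A i)"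
      then obtain i where i: "i \<in> {1..n}" "y \<in> A i" "z \<in> A i" by auto
      obtain \<eta>' where eta': "pathin X \<eta>'" "\<eta>' 0 = y" "\<eta>' 1 = z" "\<forall>s\<in>{0..1}. good (\<eta>' s)"
        using seg[OF i xy] by blast
      have "good ((\<eta> +j+ \<eta>') s)" if "s \<in> {0..1}" for s
        using that eta(4) eta'(4) by (auto simp: jn_def)
      moreover have "pathin X (\<eta> +j+ \<eta>')" using eta eta' by (simp add: pathin_join)
      ultimately show ?thesis using eta eta' by (intro exI[of _ "\<eta> +j+ \<eta>'"]) auto
    qed
  qed
  obtain \<eta> where eta: "pathin X \<eta>" "\<eta> 0 = x0" "\<eta> 1 = x1" "\<forall>s\<in>{0..1}. good (\<eta> s)"
    using main[of x1] p_eq[OF x0 x1] e by blast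
  have "hp Y (p \<circ> \<eta>) (\<lambda>_. p x0)"
  proof (rule hp_strick)
    show "pathin Y (p \<circ> \<eta>)" using eta(1) contp by (rule pathin_compose)
    show "(p \<circ> \<eta>) 0 = p x0" using eta(2) by simp
    show "(p \<circ> \<eta>) 1 = p x0" using eta(3) e by simp
    fix s W assume s: "s \<in> {0..1}" and W: "openin Y W" "(p \<circ> \<eta>) s \<in> W"
    have "good (\<eta> s)" using eta(4) s by blast
    then show "p x0 \<in> W" using W unfolding good_def by simp
  qed
  then show ?thesis using eta by blast
qed

definition Rl :: "(real \<Rightarrow> 'a set) \<Rightarrow> bool" where
  "Rl g \<longleftrightarrow> (\<forall>x0 x1. x0 \<in> T \<and> x1 \<in> T \<and> p x0 = g 0 \<and> p x1 = g 1 \<longrightarrow>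
      (\<exists>\<gamma>. pathin X \<gamma> \<and> \<gamma> 0 = x0 \<and> \<gamma> 1 = x1 \<and> hp Y (p \<circ> \<gamma>) g))"

lemma Rl_hp: assumes "Rl a" "hp Y a b" shows "Rl b"
  unfolding Rl_def
proof (intro allI impI)
  fix x0 x1 assume x: "x0 \<in> T \<and> x1 \<in> T \<and> p x0 = b 0 \<and> p x1 = b 1"
  have e: "b 0 = a 0" "b 1 = a 1" using hp_imp[OF assms(2)] by auto
  obtain \<gamma> where "pathin X \<gamma>" "\<gamma> 0 = x0" "\<gamma> 1 = x1" "hp Y (p \<circ> \<gamma>) a"
    using assms(1) x e unfolding Rl_def by metis
  then show "\<exists>\<gamma>. pathin X \<gamma> \<and> \<gamma> 0 = x0 \<and> \<gamma> 1 = x1 \<and> hp Y (p \<circ> \<gamma>) b"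
    using hp_trans assms(2) by blast
qed

lemma Rl_join:
  assumes Ra: "Rl a" and Rb: "Rl b" and pa: "pathin Y a" and pb: "pathin Y b" and e: "a 1 = b 0"
  shows "Rl (a +j+ b)"
  unfolding Rl_def
proof (intro allI impI)
  fix x0 x1 assume x: "x0 \<in> T \<and> x1 \<in> T \<and> p x0 = (a +j+ b) 0 \<and> p x1 = (a +j+ b) 1"
  have "a 1 \<in> p ` T" using path_finish_in_topspace[OF pa] topY by simp
  then obtain xm where xm: "xm \<in> T" "p xm = a 1" by auto
  obtain \<gamma>1 where g1: "pathin X \<gamma>1" "\<gamma>1 0 = x0" "\<gamma>1 1 = xm" "hp Y (p \<circ> \<gamma>1) a"
    using Ra x xm unfolding Rl_def by (metis j0)
  obtain \<gamma>2 where g2: "pathin X \<gamma>2" "\<gamma>2 0 = xm" "\<gamma>2 1 = x1" "hp Y (p \<circ> \<gamma>2) b"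
    using Rb x xm e unfolding Rl_def by (metis j1)
  have "hp Y ((p \<circ> \<gamma>1) +j+ (p \<circ> \<gamma>2)) (a +j+ b)"
    using hp_join[OF g1(4) g2(4)] g1(3) g2(2) by simp
  moreover have "pathin X (\<gamma>1 +j+ \<gamma>2)" using g1 g2 by (simp add: pathin_join)
  ultimately show "\<exists>\<gamma>. pathin X \<gamma> \<and> \<gamma> 0 = x0 \<and> \<gamma> 1 = x1 \<and> hp Y (p \<circ> \<gamma>) (a +j+ b)"
    using g1 g2 by (intro exI[of _ "\<gamma>1 +j+ \<gamma>2"]) (simp add: p_jn)
qed

lemma Rl_const: assumes "c \<in> topspace Y" shows "Rl (\<lambda>_. c)"
  unfolding Rl_def
proof (intro allI impI)
  fix x0 x1 assume x: "x0 \<in> T \<and> x1 \<in> T \<and> p x0 = c \<and> p x1 = c"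
  then obtain \<eta> where "pathin X \<eta>" "\<eta> 0 = x0" "\<eta> 1 = x1" "hp Y (p \<circ> \<eta>) (\<lambda>_. p x0)"
    using fiber_path by metis
  then show "\<exists>\<gamma>. pathin X \<gamma> \<and> \<gamma> 0 = x0 \<and> \<gamma> 1 = x1 \<and> hp Y (p \<circ> \<gamma>) (\<lambda>_. c)"
    using x by auto
qed

lemma local_lift:
  assumes lpc: "locally_path_connected_space X" and slsc: "semi_locally_simply_connected Y"
    and y: "y \<in> topspace Y"
  shows "\<exists>W. openin Y W \<and> y \<in> W \<and> (\<forall>g. pathin Y g \<and> (\<forall>s\<in>{0..1}. g s \<in> W) \<longrightarrow> Rl g)"
proof -
  obtain U where U: "openin Y U" "y \<in> U"
    and Ul: "\<And>g. loop_at (subtopology Y U) y g \<Longrightarrow> homotopic_loops_at Y y g (\<lambda>_. y)"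
    using slsc y unfolding semi_locally_simply_connected_def by blast
  obtain x where x: "x \<in> T" "y = p x" using y topY by auto
  have O: "openin X {z \<in> T. p z \<in> U}" using U(1) unfolding openinY by blast
  have xO: "x \<in> {z \<in> T. p z \<in> U}" using x U by simp
  obtain V where V: "openin X V" "path_connectedin X V" "x \<in> V" "V \<subseteq> {z \<in> T. p z \<in> U}"
    using lpc O xO unfolding locally_path_connected_space by blast
  have pcV: "\<forall>a\<in>V. \<forall>b\<in>V. \<exists>g. pathin X g \<and> g \<in> {0..1} \<rightarrow> V \<and> g 0 = a \<and> g 1 = b"
    using V(2) unfolding path_connectedin by blast
  have WU: "p ` V \<subseteq> U" using V(4) by auto
  have "(\<forall>g. pathin Y g \<and> (\<forall>s\<in>{0..1}. g s \<in> p ` V) \<longrightarrow> Rl g)"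
  proof (intro allI impI)
    fix g assume g: "pathin Y g \<and> (\<forall>s\<in>{0..1}. g s \<in> p ` V)"
    then have g0: "g 0 \<in> p ` V" and g1: "g 1 \<in> p ` V" by auto
    obtain z0 where z0: "z0 \<in> V" "p z0 = g 0" using g0 by auto
    obtain z1 where z1: "z1 \<in> V" "p z1 = g 1" using g1 by auto
    obtain \<alpha>0 where a0: "pathin X \<alpha>0" "\<alpha>0 \<in> {0..1} \<rightarrow> V" "\<alpha>0 0 = x" "\<alpha>0 1 = z0"
      using pcV V(3) z0(1) by blast
    obtain \<alpha>1 where a1: "pathin X \<alpha>1" "\<alpha>1 \<in> {0..1} \<rightarrow> V" "\<alpha>1 0 = x" "\<alpha>1 1 = z1"
      using pcV V(3) z1(1) by blast
    define a where "a = p \<circ> \<alpha>0"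
    define b where "b = p \<circ> \<alpha>1"
    have pa: "pathin Y a" unfolding a_def using a0(1) contp by (rule pathin_compose)
    have pb: "pathin Y b" unfolding b_def using a1(1) contp by (rule pathin_compose)
    have pg: "pathin Y g" using g by blast
    have ae: "a 0 = y" "a 1 = g 0" using a0 x z0 by (auto simp: a_def)
    have be: "b 0 = y" "b 1 = g 1" using a1 x z1 by (auto simp: b_def)
    have ain: "\<forall>s\<in>{0..1}. a s \<in> U" using a0(2) WU by (auto simp: a_def)
    have bin: "\<forall>s\<in>{0..1}. b s \<in> U" using a1(2) WU by (auto simp: b_def)
    have gin: "\<forall>s\<in>{0..1}. g s \<in> U" using g WU by blast
    define l where "l = a +j+ (g +j+ rv b)"
    have pl: "pathin Y l" unfolding l_def
      using pa pg pathin_reverse[OF pb] ae be by (simp add: pathin_join)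
    have lin: "\<forall>s\<in>{0..1}. l s \<in> U" unfolding l_def
      by (intro jn_in rv_in ain gin bin)
    have le: "l 0 = y" "l 1 = y" using ae be by (auto simp: l_def)
    have "loop_at (subtopology Y U) y l"
      unfolding loop_at_def pathin_subtopology using pl lin le by blast
    then have "homotopic_loops_at Y y l (\<lambda>_. y)" by (rule Ul)
    then have hl: "hp Y (a +j+ (g +j+ rv b)) (\<lambda>_. y)"
      unfolding homotopic_loops_at_def hp_def using le by (simp add: l_def)
    define M where "M = rv a +j+ b"
    have hM: "hp Y g M" unfolding M_def
      using hp_cancel[OF pa pg pb ae(1) be(1) ae(2) be(2)[symmetric] hl] .
    show "Rl g" unfolding Rl_def
    proof (intro allI impI)
      fix x0 x1 assume xx: "x0 \<in> T \<and> x1 \<in> T \<and> p x0 = g 0 \<and> p x1 = g 1"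
      have z0T: "z0 \<in> T" and z1T: "z1 \<in> T" using V(4) z0 z1 by auto
      obtain \<eta>0 where e0: "pathin X \<eta>0" "\<eta>0 0 = x0" "\<eta>0 1 = z0" "hp Y (p \<circ> \<eta>0) (\<lambda>_. p x0)"
        using fiber_path[of x0 z0] xx z0T z0(2) by metis
      obtain \<eta>1 where e1: "pathin X \<eta>1" "\<eta>1 0 = z1" "\<eta>1 1 = x1" "hp Y (p \<circ> \<eta>1) (\<lambda>_. p z1)"
        using fiber_path[of z1 x1] xx z1T z1(2) by metis
      define \<gamma> where "\<gamma> = \<eta>0 +j+ ((rv \<alpha>0 +j+ \<alpha>1) +j+ \<eta>1)"
      have pgam: "pathin X \<gamma>" unfolding \<gamma>_def
        using e0 e1 a0 a1 pathin_reverse[OF a0(1)] by (simp add: pathin_join)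
      have gam01: "\<gamma> 0 = x0" "\<gamma> 1 = x1" using e0 e1 by (auto simp: \<gamma>_def)
      have pgeq: "p \<circ> \<gamma> = (p \<circ> \<eta>0) +j+ (M +j+ (p \<circ> \<eta>1))"
        by (simp add: \<gamma>_def M_def p_jn p_rv a_def b_def)
      have pM: "pathin Y M" unfolding M_def using pathin_reverse[OF pa] pb ae be by (simp add: pathin_join)
      have Me: "M 0 = p x0" "M 1 = p z1" using ae be xx z1 by (auto simp: M_def rv_def)
      have h1: "hp Y ((p \<circ> \<eta>0) +j+ (M +j+ (p \<circ> \<eta>1))) ((\<lambda>_. p x0) +j+ (M +j+ (\<lambda>_. p z1)))"
        using hp_join[OF e0(4) hp_join[OF hp_refl[OF pM] e1(4)]] Me e0 e1 z0(2) xx by simp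
      have h2: "hp Y ((\<lambda>_. p x0) +j+ (M +j+ (\<lambda>_. p z1))) ((\<lambda>_. p x0) +j+ M)"
      proof -
        have r: "hp Y (M +j+ (\<lambda>_. p z1)) M" using hp_runit[OF pM] unfolding Me(2) .
        have c: "hp Y (\<lambda>_. p x0) (\<lambda>_. p x0)"
          by (rule hp_refl) (use xx topY in auto)
        have e: "(\<lambda>_::real. p x0) 1 = (M +j+ (\<lambda>_. p z1)) 0" using Me(1) by simp
        show ?thesis using hp_join[OF c r e] .
      qed
      have h3: "hp Y ((\<lambda>_. p x0) +j+ M) M" using hp_lunit[OF pM] Me by simp
      have "hp Y (p \<circ> \<gamma>) g"
        unfolding pgeq using hp_trans[OF h1 hp_trans[OF h2 hp_trans[OF h3 hp_sym[OF hM]]]] .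
      then show "\<exists>\<gamma>. pathin X \<gamma> \<and> \<gamma> 0 = x0 \<and> \<gamma> 1 = x1 \<and> hp Y (p \<circ> \<gamma>) g"
        using pgam gam01 by blast
    qed
  qed
  moreover have "openin Y (p ` V)" using open_image[OF V(1)] .
  moreover have "y \<in> p ` V" using x V(3) by simp
  ultimately show ?thesis by blast
qed

lemma global_lift:
  assumes lpc: "locally_path_connected_space X" and slsc: "semi_locally_simply_connected Y"
    and g: "pathin Y g"
  shows "Rl g"
proof -
  define good where "good W \<longleftrightarrow> openin Y W \<and> (\<forall>h. pathin Y h \<and> (\<forall>s\<in>{0..1}. h s \<in> W) \<longrightarrow> Rl h)" for W
  define G where "G = {Q. open Q \<and> (\<exists>W. good W \<and> (\<forall>s\<in>Q \<inter> {0..1}. g s \<in> W))}"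
  have gc: "continuous_map (top_of_set {0..1}) Y g" using g by (simp add: pathin_def)
  have cover: "{0..1} \<subseteq> \<Union>G"
  proof
    fix s :: real assume s: "s \<in> {0..1}"
    have "g s \<in> topspace Y" using path_image_subset_topspace[OF g] s by blast
    then obtain W where W: "openin Y W" "g s \<in> W"
      and WR: "\<forall>h. pathin Y h \<and> (\<forall>s\<in>{0..1}. h s \<in> W) \<longrightarrow> Rl h"
      using local_lift[OF lpc slsc] by blast
    have "openin (top_of_set {0..1}) {t \<in> topspace (top_of_set {0..1}). g t \<in> W}"
      using openin_continuous_map_preimage[OF gc W(1)] .
    then obtain Q where Q: "open Q" "{t \<in> {0..1}. g t \<in> W} = {0..1} \<inter> Q"
      unfolding openin_open by auto
    have "s \<in> Q" using Q(2) s W(2) by blast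
    moreover have "Q \<in> G" unfolding G_def good_def using Q W WR by blast
    ultimately show "s \<in> \<Union>G" by blast
  qed
  obtain e where e: "0 < e" and eG: "\<And>x. x \<in> {0..1} \<Longrightarrow> \<exists>Q \<in> G. ball x e \<subseteq> Q"
    using Heine_Borel_lemma[OF compact_Icc cover] unfolding G_def by blast
  obtain N :: nat where N: "N \<noteq> 0" "inverse (real N) < e"
    using real_arch_inverse e by blast
  have Npos: "real N > 0" using N by simp
  have piece: "Rl (sp (real k / real N) (real (Suc k) / real N) g)" if k: "k < N" for k
  proof -
    define u where "u = real k / real N"
    define v where "v = real (Suc k) / real N"
    have u0: "0 \<le> u" unfolding u_def by simp
    have uv: "u \<le> v" unfolding u_def v_def using Npos by (simp add: divide_right_mono)
    have v1: "v \<le> 1" unfolding v_def using k Npos by simp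
    have vu: "v - u = inverse (real N)" unfolding u_def v_def by (simp add: field_simps add_divide_distrib)
    obtain Q where Q: "Q \<in> G" "ball u e \<subseteq> Q" using eG[of u] u0 uv v1 by auto
    then obtain W where W: "good W" "\<forall>s\<in>Q \<inter> {0..1}. g s \<in> W" unfolding G_def by blast
    have "\<forall>s\<in>{0..1}. sp u v g s \<in> W"
    proof
      fix s :: real assume s: "s \<in> {0..1}"
      define t where "t = (v - u) * s + u"
      have "(v - u) * s \<le> (v - u) * 1" using s uv by (intro mult_left_mono) auto
      moreover have "0 \<le> (v - u) * s" using s uv by auto
      ultimately have t: "u \<le> t" "t \<le> v" unfolding t_def by auto
      have "dist u t < e" using t vu N(2) by (simp add: dist_real_def)
      then have "t \<in> Q" using Q(2) by auto
      moreover have "t \<in> {0..1}" using t u0 v1 by auto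
      ultimately have "g t \<in> W" using W(2) by blast
      then show "sp u v g s \<in> W" by (simp add: sp_def t_def)
    qed
    moreover have "pathin Y (sp u v g)" using pathin_sp[OF g u0 uv v1] .
    ultimately have "Rl (sp u v g)" using W(1) unfolding good_def by blast
    then show ?thesis by (simp add: u_def v_def)
  qed
  have ind: "Rl (sp 0 (real k / real N) g)" if "k \<le> N" for k
    using that
  proof (induction k)
    case 0
    have "sp 0 (real 0 / real N) g = (\<lambda>_. g 0)" by (simp add: sp_def)
    moreover have "g 0 \<in> topspace Y" using path_start_in_topspace[OF g] .
    ultimately show ?case using Rl_const by simp
  next
    case (Suc k)
    define u where "u = real k / real N"
    define v where "v = real (Suc k) / real N"
    have u0: "0 \<le> u" unfolding u_def by simp
    have uv: "u \<le> v" unfolding u_def v_def using Npos by (simp add: divide_right_mono)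
    have v1: "v \<le> 1" unfolding v_def using Suc.prems Npos by simp
    have IH: "Rl (sp 0 u g)" using Suc by (simp add: u_def)
    have P: "Rl (sp u v g)" using piece[of k] Suc.prems by (simp add: u_def v_def)
    have "Rl (sp 0 u g +j+ sp u v g)"
      by (rule Rl_join[OF IH P pathin_sp[OF g order_refl u0 order_trans[OF uv v1]] pathin_sp[OF g u0 uv v1]])
         (simp add: sp_def)
    then have "Rl (sp 0 v g)" using sp_split[OF g u0 uv v1] by (rule Rl_hp)
    then show ?case by (simp add: v_def)
  qed
  have "sp 0 (real N / real N) g = g" using Npos by (simp add: sp_def)
  then show ?thesis using ind[of N] by simp
qed

end

theorem corollary3p6:
  fixes X :: "'a topology" and n :: nat and A :: "nat \<Rightarrow> 'a set" and a :: 'a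
  assumes "connected_space X"
    and "locally_path_connected_space X"
    and "\<And>i. i \<in> {1..n} \<Longrightarrow> openin X (A i)"
    and "\<And>i. i \<in> {1..n} \<Longrightarrow> path_connectedin X (X closure_of (A i))"
    and "semi_locally_simply_connected (collapse_space X n A)"
    and "a \<in> (\<Union>i\<in>{1..n}. A i)"
  shows "\<forall>g. loop_at (collapse_space X n A) (collapse_map X n A a) g \<longrightarrow>
           (\<exists>f. loop_at X a f \<and>
              homotopic_loops_at (collapse_space X n A) (collapse_map X n A a)
                 (collapse_map X n A \<circ> f) g)"
proof (intro allI impI)
  interpret col X n A using assms(3,4) by unfold_locales auto
  fix g assume g: "loop_at (collapse_space X n A) (collapse_map X n A a) g"
  have aT: "a \<in> topspace X" using assms(6) Asub by blast
  have pg: "pathin (collapse_space X n A) g" and ge: "g 0 = collapse_map X n A a" "g 1 = collapse_map X n A a"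
    using g by (auto simp: loop_at_def)
  have "Rl g" using global_lift[OF assms(2) assms(5) pg] .
  then obtain f where f: "pathin X f" "f 0 = a" "f 1 = a" "hp (collapse_space X n A) (collapse_map X n A \<circ> f) g"
    unfolding Rl_def using aT ge by blast
  have "homotopic_loops_at (collapse_space X n A) (collapse_map X n A a) (collapse_map X n A \<circ> f) g"
    using f(4) unfolding hp_def homotopic_loops_at_def using f(2,3) by simp
  moreover have "loop_at X a f" using f by (simp add: loop_at_def)
  ultimately show "\<exists>f. loop_at X a f \<and>
              homotopic_loops_at (collapse_space X n A) (collapse_map X n A a)
                 (collapse_map X n A \<circ> f) g" by blast
qed

end
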